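(* Let $P_1,P_2\in\mathcal P_f$ satisfy $P_1^X=P_2^X$, $P_1^Y=P_2^Y$ and $OR(P_1)=OR(P_2)$ (i.e. their odds ratio functions agree $P_1^X\times P_1^Y$-almost everywhere). Then $P_1=P_2$.
   Context: Let $(\Omega_X,\mathcal B_X)$, $(\Omega_Y,\mathcal B_Y)$ be nonempty measurable spaces, $\Omega=\Omega_X\times\Omega_Y$ with the product $\sigma$-algebra, and $\mathcal P$ the set of probability measures on $\Omega$. For $P\in\mathcal P$ let $P^X,P^Y$ be its marginals and $P^{XY}=P^X\times P^Y$. Let $\mathcal P_{\ll}=\{P\in\mathcal P: P\ll P^{XY}\ll P\}$. For $P\in\mathcal P_\ll$ with (positive) density $p=dP/dP^{XY}$ and fixed reference points $x^\circ\in\Omega_X$, $y^\circ\in\Omega_Y$, the odds ratio function is $OR_p(x,y)=\dfrac{p(x,y)\,p(x^\circ,y^\circ)}{p(x,y^\circ)\,p(x^\circ,y)}$; it is determined up to $P^{XY}$-a.e. equality and denoted $OR(P)$. The Kullback–Leibler information is $I(Q\mid P)=\int\log(dQ/dP)\,dQ$. Let $\mathcal P_f=\{P\in\mathcal P_\ll: I(P^{XY}\mid P)<\infty\}$, i.e. $\log p$ is $P^{XY}$-integrable. *)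

theory Defs
  imports "HOL-Probability.Probability"
begin

definition marg_X :: "'a measure \<Rightarrow> ('a \<times> 'b) measure \<Rightarrow> 'a measure" where
  "marg_X MX P = distr P MX fst"

definition marg_Y :: "'b measure \<Rightarrow> ('a \<times> 'b) measure \<Rightarrow> 'b measure" where
  "marg_Y MY P = distr P MY snd"

definition prod_marg :: "'a measure \<Rightarrow> 'b measure \<Rightarrow> ('a \<times> 'b) measure \<Rightarrow> ('a \<times> 'b) measure" where
  "prod_marg MX MY P = marg_X MX P \<Otimes>\<^sub>M marg_Y MY P"

text \<open>The class P_ll: probability measures on the product space with P << P^{XY} << P.
  Note: absolutely_continuous M N means N << M.\<close>
definition in_Pll :: "'a measure \<Rightarrow> 'b measure \<Rightarrow> ('a \<times> 'b) measure \<Rightarrow> bool" where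
  "in_Pll MX MY P \<longleftrightarrow> prob_space P \<and> sets P = sets (MX \<Otimes>\<^sub>M MY) \<and>
     absolutely_continuous (prod_marg MX MY P) P \<and> absolutely_continuous P (prod_marg MX MY P)"

definition in_Pf :: "'a measure \<Rightarrow> 'b measure \<Rightarrow> ('a \<times> 'b) measure \<Rightarrow> bool" where
  "in_Pf MX MY P \<longleftrightarrow> in_Pll MX MY P \<and>
     integrable (prod_marg MX MY P) (\<lambda>z. ln (enn2real (RN_deriv (prod_marg MX MY P) P z)))"

definition is_pos_density :: "'a measure \<Rightarrow> 'b measure \<Rightarrow> ('a \<times> 'b) measure \<Rightarrow> ('a \<times> 'b \<Rightarrow> real) \<Rightarrow> bool" where
  "is_pos_density MX MY P p \<longleftrightarrow> p \<in> borel_measurable (MX \<Otimes>\<^sub>M MY) \<and>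
     (\<forall>z\<in>space (MX \<Otimes>\<^sub>M MY). 0 < p z) \<and>
     P = density (prod_marg MX MY P) (\<lambda>z. ennreal (p z))"

definition odds_ratio :: "('a \<times> 'b \<Rightarrow> real) \<Rightarrow> 'a \<Rightarrow> 'b \<Rightarrow> 'a \<times> 'b \<Rightarrow> real" where
  "odds_ratio p x0 y0 z = p (fst z, snd z) * p (x0, y0) / (p (fst z, y0) * p (x0, snd z))"

end

theory Submission
  imports Defs
begin

lemma ln_odds:
  fixes a b c d a' b' c' d' :: real
  assumes pos: "a>0" "b>0" "c>0" "d>0" "a'>0" "b'>0" "c'>0" "d'>0"
    and eq: "a*b/(c*d) = a'*b'/(c'*d')"
  shows "ln a - ln a' = (ln c - ln c') + ((ln d - ln d') - (ln b - ln b'))"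
proof -
  have "ln (a*b/(c*d)) = ln a + ln b - ln c - ln d"
    using pos by (simp add: ln_div ln_mult)
  moreover have "ln (a'*b'/(c'*d')) = ln a' + ln b' - ln c' - ln d'"
    using pos by (simp add: ln_div ln_mult)
  moreover have "ln (a*b/(c*d)) = ln (a'*b'/(c'*d'))" using eq by simp
  ultimately show ?thesis by linarith
qed

lemma nonneg_prod:
  fixes a b :: real assumes "a>0" "b>0"
  shows "0 \<le> (a - b) * (ln a - ln b)"
proof (cases "a \<le> b")
  case True then have "ln a \<le> ln b" using assms by simp
  then show ?thesis using True by (simp add: mult_nonpos_nonpos)
next
  case False then have "ln b \<le> ln a" using assms by simp
  then show ?thesis using False by simp
qed

lemma zero_prod:
  fixes a b :: real assumes "a>0" "b>0" "(a - b) * (ln a - ln b) = 0"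
  shows "a = b"
  using assms by auto

theorem theorem1:
  fixes MX :: "'a measure" and MY :: "'b measure"
    and P1 P2 :: "('a \<times> 'b) measure" and x0 :: 'a and y0 :: 'b
  assumes "x0 \<in> space MX" and "y0 \<in> space MY"
    and "in_Pf MX MY P1" and "in_Pf MX MY P2"
    and "marg_X MX P1 = marg_X MX P2"
    and "marg_Y MY P1 = marg_Y MY P2"
    and "\<exists>p1 p2. is_pos_density MX MY P1 p1 \<and> is_pos_density MX MY P2 p2 \<and>
           (AE z in prod_marg MX MY P1. odds_ratio p1 x0 y0 z = odds_ratio p2 x0 y0 z)"
  shows "P1 = P2"
proof -
  note x0 = assms(1) and y0 = assms(2)
  obtain p1 p2 where d1: "is_pos_density MX MY P1 p1" and d2: "is_pos_density MX MY P2 p2"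
    and OR: "AE z in prod_marg MX MY P1. odds_ratio p1 x0 y0 z = odds_ratio p2 x0 y0 z"
    using assms(7) by blast
  define PX where "PX = marg_X MX P1"
  define PY where "PY = marg_Y MY P1"
  define M where "M = PX \<Otimes>\<^sub>M PY"
  have M1: "prod_marg MX MY P1 = M" unfolding M_def PX_def PY_def prod_marg_def ..
  have M2: "prod_marg MX MY P2 = M" unfolding M_def PX_def PY_def prod_marg_def
    using assms(5,6) by simp
  have ps1: "prob_space P1" and s1: "sets P1 = sets (MX \<Otimes>\<^sub>M MY)"
    using assms(3) unfolding in_Pf_def in_Pll_def by auto
  have ps2: "prob_space P2" and s2: "sets P2 = sets (MX \<Otimes>\<^sub>M MY)"
    using assms(4) unfolding in_Pf_def in_Pll_def by auto
  have fst1: "fst \<in> measurable P1 MX" by (subst measurable_cong_sets[OF s1 refl]) simp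
  have snd1: "snd \<in> measurable P1 MY" by (subst measurable_cong_sets[OF s1 refl]) simp
  have fst2: "fst \<in> measurable P2 MX" by (subst measurable_cong_sets[OF s2 refl]) simp
  have snd2: "snd \<in> measurable P2 MY" by (subst measurable_cong_sets[OF s2 refl]) simp
  have PXd1: "PX = distr P1 MX fst" unfolding PX_def marg_X_def ..
  have PXd2: "PX = distr P2 MX fst" unfolding PX_def using assms(5) unfolding marg_X_def by simp
  have PYd1: "PY = distr P1 MY snd" unfolding PY_def marg_Y_def ..
  have PYd2: "PY = distr P2 MY snd" unfolding PY_def using assms(6) unfolding marg_Y_def by simp
  have psX: "prob_space PX" unfolding PXd1 by (rule prob_space.prob_space_distr[OF ps1 fst1])
  have psY: "prob_space PY" unfolding PYd1 by (rule prob_space.prob_space_distr[OF ps1 snd1])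
  have sX: "sets PX = sets MX" and spX: "space PX = space MX" unfolding PXd1 by auto
  have sY: "sets PY = sets MY" and spY: "space PY = space MY" unfolding PYd1 by auto
  interpret pair_prob_space PX PY using psX psY by (simp add: pair_prob_space_def pair_sigma_finite_def prob_space_imp_sigma_finite)
  have sM: "sets M = sets (MX \<Otimes>\<^sub>M MY)" unfolding M_def by (rule sets_pair_measure_cong[OF sX sY])
  have spM: "space M = space MX \<times> space MY" unfolding M_def by (simp add: space_pair_measure spX spY)
  have p1m: "p1 \<in> borel_measurable M" using d1
    unfolding is_pos_density_def by (subst measurable_cong_sets[OF sM refl]) simp
  have p2m: "p2 \<in> borel_measurable M" using d2
    unfolding is_pos_density_def by (subst measurable_cong_sets[OF sM refl]) simp
  have p1mm[measurable]: "p1 \<in> borel_measurable (MX \<Otimes>\<^sub>M MY)" using d1 unfolding is_pos_density_def by simp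
  have p2mm[measurable]: "p2 \<in> borel_measurable (MX \<Otimes>\<^sub>M MY)" using d2 unfolding is_pos_density_def by simp
  have pos1: "\<And>z. z \<in> space M \<Longrightarrow> 0 < p1 z" using d1 spM unfolding is_pos_density_def by (auto simp add: space_pair_measure)
  have pos2: "\<And>z. z \<in> space M \<Longrightarrow> 0 < p2 z" using d2 spM unfolding is_pos_density_def by (auto simp add: space_pair_measure)
  have P1d: "P1 = density M (\<lambda>z. ennreal (p1 z))" using d1 M1 unfolding is_pos_density_def by simp
  have P2d: "P2 = density M (\<lambda>z. ennreal (p2 z))" using d2 M2 unfolding is_pos_density_def by simp
  have fm1: "sigma_finite_measure P1" using ps1 by (simp add: prob_space_imp_sigma_finite)
  have fm2: "sigma_finite_measure P2" using ps2 by (simp add: prob_space_imp_sigma_finite)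
  have RN1: "AE z in M. ennreal (p1 z) = RN_deriv M P1 z"
    by (rule RN_deriv_unique_sigma_finite[OF _ P1d[symmetric] fm1]) (use p1m in measurable)
  have RN2: "AE z in M. ennreal (p2 z) = RN_deriv M P2 z"
    by (rule RN_deriv_unique_sigma_finite[OF _ P2d[symmetric] fm2]) (use p2m in measurable)
  have RNm1: "(\<lambda>z. ln (enn2real (RN_deriv M P1 z))) \<in> borel_measurable M" by measurable
  have RNm2: "(\<lambda>z. ln (enn2real (RN_deriv M P2 z))) \<in> borel_measurable M" by measurable
  have lm1: "(\<lambda>z. ln (p1 z)) \<in> borel_measurable M" using p1m by measurable
  have lm2: "(\<lambda>z. ln (p2 z)) \<in> borel_measurable M" using p2m by measurable
  have i1: "integrable M (\<lambda>z. ln (p1 z))"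
  proof -
    have "integrable M (\<lambda>z. ln (enn2real (RN_deriv M P1 z)))" using assms(3) M1 unfolding in_Pf_def by simp
    moreover have "AE z in M. ln (enn2real (RN_deriv M P1 z)) = ln (p1 z)"
      using RN1 AE_space by eventually_elim (metis enn2real_ennreal less_imp_le pos1)
    ultimately show ?thesis using integrable_cong_AE[OF RNm1 lm1] by simp
  qed
  have i2: "integrable M (\<lambda>z. ln (p2 z))"
  proof -
    have "integrable M (\<lambda>z. ln (enn2real (RN_deriv M P2 z)))" using assms(4) M2 unfolding in_Pf_def by simp
    moreover have "AE z in M. ln (enn2real (RN_deriv M P2 z)) = ln (p2 z)"
      using RN2 AE_space by eventually_elim (metis enn2real_ennreal less_imp_le pos2)
    ultimately show ?thesis using integrable_cong_AE[OF RNm2 lm2] by simp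
  qed
  define h where "h z = ln (p1 z) - ln (p2 z)" for z
  define u where "u x = ln (p1 (x,y0)) - ln (p2 (x,y0))" for x
  define v where "v y = (ln (p1 (x0,y)) - ln (p2 (x0,y))) - (ln (p1 (x0,y0)) - ln (p2 (x0,y0)))" for y
  have ih: "integrable M h" unfolding h_def using i1 i2 by simp
  have um[measurable]: "u \<in> borel_measurable MX" unfolding u_def using y0 by measurable
  have vm[measurable]: "v \<in> borel_measurable MY" unfolding v_def using x0 by measurable
  have hm: "h \<in> borel_measurable M" unfolding h_def using lm1 lm2 by measurable
  have uvM: "(\<lambda>z. u (fst z) + v (snd z)) \<in> borel_measurable M"
    by (subst measurable_cong_sets[OF sM refl]) simp
  have AEh: "AE z in M. h z = u (fst z) + v (snd z)"
    using OR[unfolded M1] AE_space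
  proof eventually_elim
    case (elim z)
    obtain x y where z: "z = (x,y)" by (cases z)
    have x: "x \<in> space MX" and y: "y \<in> space MY" using elim z spM by auto
    have sp: "(x,y) \<in> space M" "(x,y0) \<in> space M" "(x0,y) \<in> space M" "(x0,y0) \<in> space M"
      using x y x0 y0 spM by auto
    show ?case using elim(1) unfolding z h_def u_def v_def odds_ratio_def
      using ln_odds[OF pos1[OF sp(1)] pos1[OF sp(4)] pos1[OF sp(2)] pos1[OF sp(3)]
                       pos2[OF sp(1)] pos2[OF sp(4)] pos2[OF sp(2)] pos2[OF sp(3)]]
      by simp
  qed
  have iuv: "integrable M (\<lambda>z. u (fst z) + v (snd z))"
    using ih integrable_cong_AE[OF hm uvM AEh] by simp
  have iuv': "integrable (PX \<Otimes>\<^sub>M PY) (\<lambda>z. u (fst z) + v (snd z))" using iuv M_def by simp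
  have ex_AE: "\<exists>x\<in>space N. Q x" if "prob_space N" "AE x in N. Q x" for N :: "'c measure" and Q
  proof (rule ccontr)
    assume "\<not> ?thesis"
    then have "AE x in N. False" using that(2) by (auto elim: AE_mp)
    then show False using prob_space.AE_False[OF that(1)] by simp
  qed
  have iu: "integrable PX u"
  proof -
    have "AE y in PY. integrable PX (\<lambda>x. u x + v y)"
      using AE_integrable_snd[of "\<lambda>x y. u x + v y"] iuv' by (simp add: case_prod_beta')
    then obtain y where "integrable PX (\<lambda>x. u x + v y)" using ex_AE[OF psY] by blast
    then have "integrable PX (\<lambda>x. (u x + v y) - v y)"
      using prob_space.finite_measure[OF psX] by (intro Bochner_Integration.integrable_diff) (auto simp: finite_measure.integrable_const)
    then show ?thesis by simp
  qed
  have iv: "integrable PY v"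
  proof -
    have "AE x in PX. integrable PY (\<lambda>y. u x + v y)"
      using AE_integrable_fst'[of "\<lambda>z. u (fst z) + v (snd z)"] iuv' by simp
    then obtain x where "integrable PY (\<lambda>y. u x + v y)" using ex_AE[OF psX] by blast
    then have "integrable PY (\<lambda>y. (u x + v y) - u x)"
      using prob_space.finite_measure[OF psY] by (intro Bochner_Integration.integrable_diff) (auto simp: finite_measure.integrable_const)
    then show ?thesis by simp
  qed
  have key: "integrable P h \<and> integral\<^sup>L P h = integral\<^sup>L PX u + integral\<^sup>L PY v"
    if Pd: "P = density M (\<lambda>z. ennreal (p z))" and pm: "p \<in> borel_measurable M"
      and sP: "sets P = sets (MX \<Otimes>\<^sub>M MY)"
      and dX: "PX = distr P MX fst" and dY: "PY = distr P MY snd" for P p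
  proof -
    have fP: "fst \<in> measurable P MX" by (subst measurable_cong_sets[OF sP refl]) simp
    have sdP: "snd \<in> measurable P MY" by (subst measurable_cong_sets[OF sP refl]) simp
    have hP: "h \<in> borel_measurable P" using hm by (subst measurable_cong_sets[OF trans[OF sP sM[symmetric]] refl])
    have uP: "integrable P (\<lambda>z. u (fst z))" using iu unfolding dX
      by (subst (asm) integrable_distr_eq[OF fP]) (auto simp: um)
    have vP: "integrable P (\<lambda>z. v (snd z))" using iv unfolding dY
      by (subst (asm) integrable_distr_eq[OF sdP]) (auto simp: vm)
    have IuP: "integral\<^sup>L P (\<lambda>z. u (fst z)) = integral\<^sup>L PX u" unfolding dX
      by (rule integral_distr[OF fP um, symmetric])
    have IvP: "integral\<^sup>L P (\<lambda>z. v (snd z)) = integral\<^sup>L PY v" unfolding dY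
      by (rule integral_distr[OF sdP vm, symmetric])
    have AEP: "AE z in P. h z = u (fst z) + v (snd z)"
      unfolding Pd using AEh by (subst AE_density) (use pm in auto)
    have uvP: "(\<lambda>z. u (fst z) + v (snd z)) \<in> borel_measurable P" using uP vP by auto
    have "integrable P h" using integrable_cong_AE[OF hP uvP AEP] uP vP by simp
    moreover have "integral\<^sup>L P h = integral\<^sup>L P (\<lambda>z. u (fst z) + v (snd z))"
      by (rule integral_cong_AE[OF hP uvP AEP])
    ultimately show ?thesis using IuP IvP uP vP by simp
  qed
  note k1 = key[OF P1d p1m s1 PXd1 PYd1]
  note k2 = key[OF P2d p2m s2 PXd2 PYd2]
  have nn1: "AE z in M. 0 \<le> p1 z" using AE_space by eventually_elim (simp add: less_imp_le pos1)
  have nn2: "AE z in M. 0 \<le> p2 z" using AE_space by eventually_elim (simp add: less_imp_le pos2)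
  have j1: "integrable M (\<lambda>z. p1 z * h z)"
    using k1 integrable_density[OF hm p1m nn1] P1d by simp
  have j2: "integrable M (\<lambda>z. p2 z * h z)"
    using k2 integrable_density[OF hm p2m nn2] P2d by simp
  have I1: "integral\<^sup>L P1 h = integral\<^sup>L M (\<lambda>z. p1 z * h z)"
    using integral_density[OF hm p1m nn1] P1d by simp
  have I2: "integral\<^sup>L P2 h = integral\<^sup>L M (\<lambda>z. p2 z * h z)"
    using integral_density[OF hm p2m nn2] P2d by simp
  define f where "f z = (p1 z - p2 z) * h z" for z
  have fi: "integrable M f" unfolding f_def left_diff_distrib using j1 j2 by simp
  have f0: "integral\<^sup>L M f = 0" unfolding f_def left_diff_distrib
    using j1 j2 I1 I2 k1 k2 by simp
  have fnn: "AE z in M. 0 \<le> f z" using AE_space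
    by eventually_elim (simp add: f_def h_def nonneg_prod pos1 pos2)
  have "AE z in M. f z = 0" using integral_nonneg_eq_0_iff_AE[OF fi fnn] f0 by simp
  then have "AE z in M. ennreal (p1 z) = ennreal (p2 z)" using AE_space
    by eventually_elim (metis f_def h_def zero_prod pos1 pos2)
  then have "density M (\<lambda>z. ennreal (p1 z)) = density M (\<lambda>z. ennreal (p2 z))"
    by (intro density_cong) (use p1m p2m in measurable)
  then show ?thesis using P1d P2d by simp
qed

end
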